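(* Let $y_0\approx1.35542$ be the second smallest real root of the polynomial $2y^3-9y^2+10y-2$ (its unique root in the interval $(1,2)$). Algorithm SIDLE with parameter $y=y_0$ is $\rho$-competitive for $1\mid t_j=1\mid\sum C_j$ with obligatory tests, regardless of the order in which it tests the jobs, where \[ \rho=\tfrac12\left(1-y_0+y_0^2+\sqrt{9-2y_0-y_0^2-2y_0^3+y_0^4}\right)\approx1.58451\le1.585. \]
   Context: Scheduling with obligatory tests and uniform test times: $n$ jobs on a single machine, each with test time $t_j=1$ and an unknown processing time $p_j\ge0$ revealed only when the test of $j$ completes. The test of a job must be executed before its processing part (which can be executed any time afterwards); operations are non-preemptive, one at a time. $C_j$ is the completion time of the processing part of $j$; objective $\sum_jC_j$. An algorithm is $\rho$-competitive if $\mathit{ALG}\le\rho\cdot\mathit{OPT}$ on every instance, where $\mathit{OPT}$ is the offline optimum (tests also obligatory). Algorithm SIDLE with parameter $y>0$: test the jobs one after another without idle time (in some order). When the test of job $j$ completes and reveals $p_j\le y$ (a short job), execute the processing part of $j$ immediately after its test, before the next test. If $p_j>y$ (a long job), defer its processing part. After all jobs have been tested and all short jobs executed, execute the processing parts of the long jobs in non-decreasing order of $p_j$. *)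

theory Defs
  imports Complex_Main
begin

(* Instance: jobs 0..<n, each with test time 1 and processing time p j >= 0.
   A (non-preemptive, single-machine) schedule assigns to every job j a start time
   st j of its test (length 1) and a start time sp j of its processing part (length p j). *)
definition feasible_schedule ::
  "nat \<Rightarrow> (nat \<Rightarrow> real) \<Rightarrow> (nat \<Rightarrow> real) \<Rightarrow> (nat \<Rightarrow> real) \<Rightarrow> bool" where
  "feasible_schedule n p st sp \<longleftrightarrow>
     (\<forall>j<n. 0 \<le> st j \<and> st j + 1 \<le> sp j) \<and>
     (\<forall>i<n. \<forall>j<n. i \<noteq> j \<longrightarrow> st i + 1 \<le> st j \<or> st j + 1 \<le> st i) \<and>
     (\<forall>i<n. \<forall>j<n. i \<noteq> j \<longrightarrow> sp i + p i \<le> sp j \<or> sp j + p j \<le> sp i) \<and>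
     (\<forall>i<n. \<forall>j<n. st i + 1 \<le> sp j \<or> sp j + p j \<le> st i)"

definition sched_cost :: "nat \<Rightarrow> (nat \<Rightarrow> real) \<Rightarrow> (nat \<Rightarrow> real) \<Rightarrow> real" where
  "sched_cost n p sp = (\<Sum>j<n. sp j + p j)"

definition OPT :: "nat \<Rightarrow> (nat \<Rightarrow> real) \<Rightarrow> real" where
  "OPT n p = Inf {sched_cost n p sp | st sp. feasible_schedule n p st sp}"

(* Algorithm SIDLE with threshold y.
   pos j  = position (0-based) of job j in the testing order (a bijection on {..<n});
   rk j   = rank used to order the deferred long jobs; it must list the long jobs in
            non-decreasing order of p (any tie-breaking is allowed).
   Tests are run back to back; a short job (p j <= y) is processed right after its test.
   After all tests and short jobs (time n + sum of short p), long jobs are processed in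
   the order rk. *)
definition sidle_C ::
  "real \<Rightarrow> nat \<Rightarrow> (nat \<Rightarrow> real) \<Rightarrow> (nat \<Rightarrow> nat) \<Rightarrow> (nat \<Rightarrow> nat) \<Rightarrow> nat \<Rightarrow> real" where
  "sidle_C y n p pos rk j =
     (if p j \<le> y then
        real (pos j) + 1 + (\<Sum>i\<in>{i. i < n \<and> p i \<le> y \<and> pos i \<le> pos j}. p i)
      else
        real n + (\<Sum>i\<in>{i. i < n \<and> p i \<le> y}. p i)
          + (\<Sum>i\<in>{i. i < n \<and> y < p i \<and> rk i \<le> rk j}. p i))"

definition sidle_cost ::
  "real \<Rightarrow> nat \<Rightarrow> (nat \<Rightarrow> real) \<Rightarrow> (nat \<Rightarrow> nat) \<Rightarrow> (nat \<Rightarrow> nat) \<Rightarrow> real" where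
  "sidle_cost y n p pos rk = (\<Sum>j<n. sidle_C y n p pos rk j)"

definition long_order_ok :: "real \<Rightarrow> nat \<Rightarrow> (nat \<Rightarrow> real) \<Rightarrow> (nat \<Rightarrow> nat) \<Rightarrow> bool" where
  "long_order_ok y n p rk \<longleftrightarrow> bij_betw rk {..<n} {..<n} \<and>
     (\<forall>i<n. \<forall>j<n. y < p i \<and> y < p j \<and> rk i < rk j \<longrightarrow> p i \<le> p j)"

end

theory Submission
  imports Defs
begin


lemma core_psd:
  fixes y d K S L :: real
  assumes y: "0<y" and d: "0<d" and dy: "y < d*(2+d)" and det: "d^2 + (1+y-y^2)*d + y - 2 = 0"
  shows "0 \<le> d*K^2 - 2*K*S + (2+d)/y*S^2 + 2*(d-1)*K*L + 2*d*S*L + (d*(1+y)-1)*L^2"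
proof -
  define c where "c = (2+d)/y"
  define P where "P = c*d - 1"
  define e where "e = d*(1+y)-1"
  define Qm where "Qm = e*d - (d-1)^2"
  define W where "W = d^2+d-1"
  have cy: "c*y = 2+d" using y by (simp add: c_def)
  have Ppos: "0 < P" proof -
    have "y*P = (c*y)*d - y" by (simp add: P_def algebra_simps)
    then have "y*P = d*(2+d) - y" using cy by (simp add: algebra_simps)
    then show ?thesis using dy y by (smt (verit) mult_pos_pos mult_le_0_iff)
  qed
  have z: "P*Qm - W^2 = 0"
  proof -
    have "y*(P*Qm - W^2) = d*(d^2 + (1+y-y^2)*d + y - 2)"
    proof -
      have "y*(P*Qm - W^2) = (c*y)*d*Qm - y*Qm - y*W^2" by (simp add: P_def algebra_simps)
      also have "... = (2+d)*d*Qm - y*Qm - y*W^2" using cy by simp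
      also have "... = d*(d^2 + (1+y-y^2)*d + y - 2)" unfolding Qm_def W_def e_def
        by (simp add: algebra_simps power2_eq_square)
      finally show ?thesis .
    qed
    then show ?thesis using det y by simp
  qed
  have id: "d*P*(d*K^2 - 2*K*S + c*S^2 + 2*(d-1)*K*L + 2*d*S*L + e*L^2)
     = P*(d*K - S + (d-1)*L)^2 + (P*S + W*L)^2 + (P*Qm - W^2)*L^2"
    unfolding P_def Qm_def W_def by (simp add: algebra_simps power2_eq_square)
  have "0 \<le> d*P*(d*K^2 - 2*K*S + c*S^2 + 2*(d-1)*K*L + 2*d*S*L + e*L^2)"
    unfolding id z using Ppos by simp
  then have "0 \<le> d*K^2 - 2*K*S + c*S^2 + 2*(d-1)*K*L + 2*d*S*L + e*L^2"
    using Ppos d by (metis mult_pos_pos not_le zero_le_mult_iff)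
  then show ?thesis by (simp add: c_def e_def)
qed




lemma y_bounds:
  fixes y :: real
  assumes "1<y" "y<2" and f: "2*y^3-9*y^2+10*y-2=0"
  shows "1.355 < y \<and> y < 1.3555"
proof -
  have fac: "\<And>b::real. 2*y^3-9*y^2+10*y-2 - (2*b^3-9*b^2+10*b-2) = (y-b)*(2*(y^2+y*b+b^2) - 9*(y+b) + 10)"
    by (simp add: algebra_simps power2_eq_square power3_eq_cube)
  have q: "\<And>b::real. 1 \<le> b \<Longrightarrow> b \<le> 2 \<Longrightarrow> 2*(y^2+y*b+b^2) - 9*(y+b) + 10 < 0"
  proof -
    fix b :: real assume b: "1 \<le> b" "b \<le> 2"
    have e: "2*(y^2+y*b+b^2) - 9*(y+b) + 10 = (2-y)*(2*b^2-7*b+3) + (y-1)*(2*b^2-5*b) + 2*(y-1)*(y-2)"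
      by (simp add: algebra_simps power2_eq_square)
    have "2*b^2-7*b+3 < 0 \<or> True" by simp
    have h1: "2*b^2-7*b+3 \<le> 0"
    proof -
      have "2*b^2-7*b+3 = (2*b-1)*(b-3)" by (simp add: algebra_simps power2_eq_square)
      moreover have "(2*b-1)*(b-3) \<le> 0" using b by (simp add: mult_nonneg_nonpos)
      ultimately show ?thesis by simp
    qed
    have h2: "2*b^2-5*b < 0"
    proof -
      have "2*b^2-5*b = b*(2*b-5)" by (simp add: algebra_simps power2_eq_square)
      moreover have "b*(2*b-5) < 0" using b by (simp add: mult_pos_neg)
      ultimately show ?thesis by simp
    qed
    have "(2-y)*(2*b^2-7*b+3) \<le> 0" using h1 assms(2) by (simp add: mult_nonneg_nonpos)
    moreover have "(y-1)*(2*b^2-5*b) < 0" using h2 assms(1) by (simp add: mult_pos_neg)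
    moreover have "(y-1)*(y-2) < 0" using assms(1,2) by (simp add: mult_pos_neg)
    ultimately show "2*(y^2+y*b+b^2) - 9*(y+b) + 10 < 0" unfolding e by linarith
  qed
  have A: "1.355 < y"
  proof (rule ccontr)
    assume "\<not> 1.355 < y"
    then have "y - 1.355 \<le> 0" by simp
    moreover have "2*(y^2+y*1.355+1.355^2) - 9*(y+1.355) + 10 < (0::real)" by (rule q) auto
    ultimately have "0 \<le> (y-1.355)*(2*(y^2+y*1.355+1.355^2) - 9*(y+1.355) + 10)"
      by (simp add: mult_nonpos_nonpos)
    with fac[of "1.355"] f show False by (simp add: power2_eq_square power3_eq_cube)
  qed
  have B: "y < 1.3555"
  proof (rule ccontr)
    assume "\<not> y < 1.3555"
    then have "0 \<le> y - 1.3555" by simp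
    moreover have "2*(y^2+y*1.3555+1.3555^2) - 9*(y+1.3555) + 10 < (0::real)" by (rule q) auto
    ultimately have "(y-1.3555)*(2*(y^2+y*1.3555+1.3555^2) - 9*(y+1.3555) + 10) \<le> 0"
      by (simp add: mult_nonneg_nonpos)
    with fac[of "1.3555"] f show False by (simp add: power2_eq_square power3_eq_cube)
  qed
  show ?thesis using A B by simp
qed




lemma rho_facts:
  fixes y :: real
  assumes y1: "(271/200) < y" and y2: "y < (2711/2000)"
  defines "r \<equiv> (1 - y + y^2 + sqrt (9 - 2*y - y^2 - 2*y^3 + y^4))/2"
  shows "r \<le> 1.585" "(r-1)^2 + (1+y-y^2)*(r-1) + y - 2 = 0" "1/2 \<le> r - 1"
    "y < (r-1)*(2+(r-1))"
proof -
  have y1: "271/200 < y" and y2: "y < 2711/2000" using y1 y2 by simp_all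
  define a where "a = 1+y-y^2"
  define g where "g = 9 - 2*y - y^2 - 2*y^3 + y^4"
  define s where "s = sqrt g"
  have ga: "g = a^2 + 8 - 4*y" unfolding a_def g_def by (simp add: algebra_simps power2_eq_square power3_eq_cube power4_eq_xxxx)
  have gpos: "0 < g" unfolding ga using y2 zero_le_power2[of a] by linarith
  have ss: "s^2 = g" unfolding s_def using order_less_imp_le[OF gpos] by simp
  have ss: "s^2 = g" unfolding s_def by (meson gpos less_imp_le real_sqrt_pow2)
  have rs: "r - 1 = (s - a)/2" unfolding r_def s_def g_def a_def by (simp add: field_simps)
  show "(r-1)^2 + (1+y-y^2)*(r-1) + y - 2 = 0"
    unfolding rs a_def[symmetric]
  proof -
    have "((s - a)/2)^2 + a*((s-a)/2) + y - 2 = (s^2 - a^2)/4 + y - 2"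
      by (simp add: field_simps power2_eq_square)
    also have "... = 0" unfolding ss ga by (simp add: field_simps)
    finally show "((s - a)/2)^2 + a*((s-a)/2) + y - 2 = 0" .
  qed
  have sq: "(a+1)^2 \<le> g"
  proof -
    have "(a+1)^2 = a^2 + 2*a + 1" by (simp add: power2_eq_square algebra_simps)
    moreover have "2*a+1 \<le> 8 - 4*y"
    proof -
      have "0 \<le> 2*(y-3/2)^2 + 1/2" by simp
      then show ?thesis unfolding a_def by (simp add: power2_eq_square algebra_simps)
    qed
    ultimately show ?thesis unfolding ga by simp
  qed
  have "a + 1 \<le> s"
  proof -
    have "\<bar>a+1\<bar> \<le> s" unfolding s_def using real_sqrt_le_mono[OF sq] by simp
    then show ?thesis by simp
  qed
  then show d: "1/2 \<le> r - 1" unfolding rs by simp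
  have b: "0 < 1 - y + y^2"
  proof -
    have "y \<le> y^2" using y1 by (simp add: power2_eq_square)
    then show ?thesis by linarith
  qed
  have e1: "(r-1)*(2+(r-1)) = 2 - y + (r-1)*(1 - y + y^2)"
  proof -
    have "(r-1)*(2+(r-1)) = (r-1)^2 + 2*(r-1)" by (simp add: power2_eq_square algebra_simps)
    also have "(r-1)^2 = 2 - y - (1+y-y^2)*(r-1)"
      using \<open>(r-1)^2 + (1+y-y^2)*(r-1) + y - 2 = 0\<close> by linarith
    finally show ?thesis by (simp add: algebra_simps)
  qed
  have "(1 - y + y^2)/2 \<le> (r-1)*(1 - y + y^2)" using d b by (simp add: mult_right_mono)
  moreover have "2*y - 2 < (1 - y + y^2)/2"
  proof -
    have "(y-1)*(4-y) < (711/2000) * (5290/2000)"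
      by (rule mult_strict_mono) (use y1 y2 in auto)
    then show ?thesis by (simp add: power2_eq_square algebra_simps)
  qed
  ultimately show "y < (r-1)*(2+(r-1))" unfolding e1 by linarith
  have h: "g \<le> (a + (117/100))^2"
  proof -
    have p: "0 \<le> (y-(271/200))*((2711/2000)-y)" using y1 y2 by simp
    have eqg: "(a + (117/100))^2 - g = (234/100)*a + 4*y - (66311/10000)" unfolding ga by (simp add: power2_eq_square algebra_simps)
    have pe: "(y-(271/200))*((2711/2000)-y) = -(y^2) + (271/200+2711/2000)*y - 271/200*(2711/2000)"
      by (simp add: field_simps power2_eq_square)
    moreover have "0 \<le> (234/100)*a + 4*y - (66311/10000)" unfolding a_def
    proof -
      have q: "y^2 \<le> (271/200+2711/2000)*y - 271/200*(2711/2000)" using p pe by linarith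
      show "0 \<le> (234/100)*(1+y-y^2) + 4*y - (66311/10000)" using q y2 by (simp add: field_simps)
    qed
    ultimately show ?thesis using eqg by simp
  qed
  have a0: "0 \<le> a + (117/100)"
  proof -
    have "y*y < (2711/2000)*(2711/2000)" by (rule mult_strict_mono) (use y1 y2 in auto)
    then show ?thesis unfolding a_def using y1 by (simp add: power2_eq_square)
  qed
  have "s \<le> a + (117/100)" unfolding s_def using real_sqrt_le_mono[OF h] a0 by simp
  then show "r \<le> 1.585" using rs by simp
qed




lemma packing_aux:
  fixes s l :: "'a \<Rightarrow> real"
  assumes "finite A"
  shows "\<forall>T. (\<forall>a\<in>A. 0 \<le> s a \<and> 0 < l a \<and> s a + l a \<le> T) \<longrightarrow>
     (\<forall>a\<in>A. \<forall>b\<in>A. a \<noteq> b \<longrightarrow> s a + l a \<le> s b \<or> s b + l b \<le> s a) \<longrightarrow> 0 \<le> T \<longrightarrow> sum l A \<le> T"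
  using assms
proof (induction A rule: finite_ranking_induct[where f=s])
  case empty
  then show ?case by simp
next
  case (insert x S)
  show ?case
  proof (intro allI impI)
    fix T
    assume H1: "\<forall>a\<in>insert x S. 0 \<le> s a \<and> 0 < l a \<and> s a + l a \<le> T"
      and H2: "\<forall>a\<in>insert x S. \<forall>b\<in>insert x S. a \<noteq> b \<longrightarrow> s a + l a \<le> s b \<or> s b + l b \<le> s a"
      and T0: "0 \<le> T"
    show "sum l (insert x S) \<le> T"
    proof (cases "x \<in> S")
      case True
      then show ?thesis using insert.IH H1 H2 T0 by (simp add: insert_absorb)
    next
      case False
      have "\<forall>a\<in>S. 0 \<le> s a \<and> 0 < l a \<and> s a + l a \<le> s x"
      proof
        fix a assume a: "a \<in> S"
        have "a \<noteq> x" using a False by auto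
        then have "s a + l a \<le> s x \<or> s x + l x \<le> s a" using H2 a by auto
        moreover have "s a \<le> s x" using insert.hyps(2) a by simp
        moreover have "0 < l x" using H1 by simp
        ultimately show "0 \<le> s a \<and> 0 < l a \<and> s a + l a \<le> s x" using H1 a by auto
      qed
      then have "sum l S \<le> s x" using insert.IH H2 H1 by auto
      then show ?thesis using False insert.hyps(1) H1 by simp
    qed
  qed
qed




lemma job_before_bound:
  assumes p: "\<forall>j<n. 0 \<le> p j" and F: "feasible_schedule n p st sp" and j: "j < n"
  shows "(\<Sum>i<n. if sp i + p i < sp j + p j \<or> (sp i + p i = sp j + p j \<and> i \<le> j) then 1 + p i else 0)
          \<le> sp j + p j"
proof -
  define P where "P i \<longleftrightarrow> sp i + p i < sp j + p j \<or> (sp i + p i = sp j + p j \<and> i \<le> j)" for i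
  define B where "B = {i. i < n \<and> P i}"
  define s where "s a = (if snd a then st (fst a) else sp (fst a))" for a :: "nat \<times> bool"
  define l where "l a = (if snd a then 1 else p (fst a))" for a :: "nat \<times> bool"
  define A where "A = {a \<in> B \<times> UNIV. 0 < l a}"
  have fB: "finite B" unfolding B_def by simp
  have fA: "finite A" unfolding A_def using fB by simp
  have F1: "\<forall>j<n. 0 \<le> st j \<and> st j + 1 \<le> sp j"
   and F2: "\<forall>i<n. \<forall>j<n. i \<noteq> j \<longrightarrow> st i + 1 \<le> st j \<or> st j + 1 \<le> st i"
   and F3: "\<forall>i<n. \<forall>j<n. i \<noteq> j \<longrightarrow> sp i + p i \<le> sp j \<or> sp j + p j \<le> sp i"
   and F4: "\<forall>i<n. \<forall>j<n. st i + 1 \<le> sp j \<or> sp j + p j \<le> st i"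
    using F unfolding feasible_schedule_def by blast+
  have C1: "\<forall>a\<in>A. 0 \<le> s a \<and> 0 < l a \<and> s a + l a \<le> sp j + p j"
  proof
    fix a assume a: "a \<in> A"
    obtain i t where it: "a = (i,t)" by (cases a)
    have i: "i < n" "P i" using a it unfolding A_def B_def by auto
    have le: "sp i + p i \<le> sp j + p j" using i(2) unfolding P_def by auto
    show "0 \<le> s a \<and> 0 < l a \<and> s a + l a \<le> sp j + p j"
      using a it F1 i(1) p le unfolding A_def s_def l_def
      by (cases t) (auto, smt (verit))
  qed
  have C2: "\<forall>a\<in>A. \<forall>b\<in>A. a \<noteq> b \<longrightarrow> s a + l a \<le> s b \<or> s b + l b \<le> s a"
  proof (intro ballI impI)
    fix a b assume a: "a \<in> A" and b: "b \<in> A" and ab: "a \<noteq> b"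
    obtain i t where it: "a = (i,t)" by (cases a)
    obtain i' t' where it': "b = (i',t')" by (cases b)
    have i: "i < n" "i' < n" using a b it it' unfolding A_def B_def by auto
    show "s a + l a \<le> s b \<or> s b + l b \<le> s a"
    proof (cases t; cases t')
      assume "t" "t'" then show ?thesis using F2 i ab it it' unfolding s_def l_def by auto
    next
      assume "\<not>t" "\<not>t'" then show ?thesis using F3 i ab it it' unfolding s_def l_def by auto
    next
      assume "t" "\<not>t'" then show ?thesis using F4 i ab it it' unfolding s_def l_def by auto
    next
      assume "\<not>t" "t'" then show ?thesis using F4 i ab it it' unfolding s_def l_def by force
    qed
  qed
  have T0: "0 \<le> sp j + p j" using F1 p j by (smt (verit))
  have "sum l A \<le> sp j + p j" using packing_aux[OF fA] C1 C2 T0 by blast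
  moreover have "sum l A = sum l (B \<times> UNIV)"
    unfolding A_def
  proof (rule sum.mono_neutral_left)
    show "finite (B \<times> (UNIV::bool set))" using fB by simp
  next
    show "{a \<in> B \<times> UNIV. 0 < l a} \<subseteq> B \<times> UNIV" by auto
  next
    show "\<forall>i\<in>B \<times> UNIV - {a \<in> B \<times> UNIV. 0 < l a}. l i = 0"
      using p unfolding l_def B_def by force
  qed
  moreover have "sum l (B \<times> UNIV) = (\<Sum>i\<in>B. 1 + p i)"
  proof -
    have "(\<Sum>i\<in>B. \<Sum>t\<in>(UNIV::bool set). l (i,t)) = sum l (B \<times> UNIV)"
      by (subst sum.cartesian_product) simp
    moreover have "(\<Sum>i\<in>B. \<Sum>t\<in>(UNIV::bool set). l (i,t)) = (\<Sum>i\<in>B. 1 + p i)"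
      by (simp add: UNIV_bool l_def add.commute)
    ultimately show ?thesis by simp
  qed
  moreover have "(\<Sum>i\<in>B. 1 + p i) = (\<Sum>i<n. if P i then 1 + p i else 0)"
    unfolding B_def using sum.inter_filter[of "{..<n}" "\<lambda>i. 1 + p i" P]
    by (simp add: lessThan_def)
  ultimately show ?thesis unfolding P_def by simp
qed




lemma pair_swap:
  fixes g :: "'a \<Rightarrow> 'a \<Rightarrow> real"
  shows "(\<Sum>j\<in>I. \<Sum>i\<in>I. if i \<noteq> j then g j i else 0) = (\<Sum>j\<in>I. \<Sum>i\<in>I. if i \<noteq> j then g i j else 0)"
  by (subst sum.swap) (simp add: eq_commute)

lemma pair_sum_ge:
  fixes g h :: "'a \<Rightarrow> 'a \<Rightarrow> real"
  assumes "\<forall>i\<in>I. \<forall>j\<in>I. i\<noteq>j \<longrightarrow> h i j \<le> g i j + g j i"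
  shows "(\<Sum>j\<in>I. \<Sum>i\<in>I. if i\<noteq>j then h i j else 0) \<le> 2*(\<Sum>j\<in>I. \<Sum>i\<in>I. if i\<noteq>j then g i j else 0)"
proof -
  have "(\<Sum>j\<in>I. \<Sum>i\<in>I. if i\<noteq>j then h i j else 0) \<le> (\<Sum>j\<in>I. \<Sum>i\<in>I. (if i\<noteq>j then g i j else 0) + (if i\<noteq>j then g j i else 0))"
    by (rule sum_mono, rule sum_mono) (use assms in auto)
  also have "... = 2*(\<Sum>j\<in>I. \<Sum>i\<in>I. if i\<noteq>j then g i j else 0)"
    using pair_swap[of g I] by (simp add: sum.distrib)
  finally show ?thesis .
qed

lemma pair_sum_le:
  fixes g h :: "'a \<Rightarrow> 'a \<Rightarrow> real"
  assumes "\<forall>i\<in>I. \<forall>j\<in>I. i\<noteq>j \<longrightarrow> g i j + g j i \<le> h i j"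
  shows "2*(\<Sum>j\<in>I. \<Sum>i\<in>I. if i\<noteq>j then g i j else 0) \<le> (\<Sum>j\<in>I. \<Sum>i\<in>I. if i\<noteq>j then h i j else 0)"
proof -
  have "2*(\<Sum>j\<in>I. \<Sum>i\<in>I. if i\<noteq>j then g i j else 0) = (\<Sum>j\<in>I. \<Sum>i\<in>I. (if i\<noteq>j then g i j else 0) + (if i\<noteq>j then g j i else 0))"
    using pair_swap[of g I] by (simp add: sum.distrib)
  also have "... \<le> (\<Sum>j\<in>I. \<Sum>i\<in>I. if i\<noteq>j then h i j else 0)"
    by (rule sum_mono, rule sum_mono) (use assms in auto)
  finally show ?thesis .
qed

lemma opt_lb:
  assumes p: "\<forall>j<n. 0 \<le> p j" and F: "feasible_schedule n p st sp"
  shows "(\<Sum>j<n. 1 + p j) + (1/2)*(\<Sum>j<n. \<Sum>i<n. if i\<noteq>j then 1 + min (p i) (p j) else 0) \<le> sched_cost n p sp"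
proof -
  define C where "C i = sp i + p i" for i
  define b where "b i j = (if C i < C j \<or> (C i = C j \<and> i < j) then 1 + p i else 0)" for i j
  have "(\<Sum>j<n. \<Sum>i<n. if C i < C j \<or> (C i = C j \<and> i \<le> j) then 1 + p i else 0) \<le> (\<Sum>j<n. C j)"
    by (rule sum_mono) (use job_before_bound[OF p F] in \<open>auto simp: C_def\<close>)
  moreover have "(\<Sum>j<n. \<Sum>i<n. if C i < C j \<or> (C i = C j \<and> i \<le> j) then 1 + p i else 0)
     = (\<Sum>j<n. \<Sum>i<n. (if i = j then 1 + p i else 0) + (if i\<noteq>j then b i j else 0))"
    by (rule sum.cong[OF refl], rule sum.cong[OF refl]) (auto simp: b_def)
  moreover have "(\<Sum>j<n. \<Sum>i<n. (if i = j then 1 + p i else 0) + (if i\<noteq>j then b i j else 0))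
     = (\<Sum>j<n. 1 + p j) + (\<Sum>j<n. \<Sum>i<n. if i\<noteq>j then b i j else 0)"
    by (simp add: sum.distrib)
  moreover have "(\<Sum>j<n. \<Sum>i<n. if i\<noteq>j then 1 + min (p i) (p j) else 0) \<le> 2*(\<Sum>j<n. \<Sum>i<n. if i\<noteq>j then b i j else 0)"
  proof (rule pair_sum_ge, intro ballI impI)
    fix i j assume "i \<in> {..<n}" "j \<in> {..<n}" "i \<noteq> j"
    then show "1 + min (p i) (p j) \<le> b i j + b j i"
      unfolding b_def by (cases "C i < C j"; cases "C j < C i"; cases "i < j") auto
  qed
  ultimately show ?thesis unfolding sched_cost_def C_def by linarith
qed




definition acontr :: "real \<Rightarrow> (nat \<Rightarrow> real) \<Rightarrow> (nat \<Rightarrow> nat) \<Rightarrow> (nat \<Rightarrow> nat) \<Rightarrow> nat \<Rightarrow> nat \<Rightarrow> real" where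
  "acontr y p pos rk i j = (if p j \<le> y then (if pos i < pos j then 1 + (if p i \<le> y then p i else 0) else 0)
        else 1 + (if p i \<le> y then p i else (if rk i < rk j then p i else 0)))"

lemma sum_filter_conv: "sum f {i. i < (n::nat) \<and> P i} = (\<Sum>i<n. if P i then f i else 0)"
proof -
  have "{i. i < n \<and> P i} = {i \<in> {..<n}. P i}" by auto
  moreover have "finite {..<n}" by simp
  ultimately show ?thesis using sum.inter_filter[of "{..<n}" f P] by simp
qed

lemma pos_card:
  assumes b: "bij_betw pos {..<n} {..<n}" and j: "j < n"
  shows "real (pos j) = (\<Sum>i<n. if pos i < pos j then 1 else 0)"
proof -
  have inj: "inj_on pos {..<n}" using b by (simp add: bij_betw_def)
  have img: "pos ` {..<n} = {..<n}" using b by (simp add: bij_betw_def)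
  have pj: "pos j < n" using img j by auto
  have imgj: "pos ` {i. i < n \<and> pos i < pos j} = {..<pos j}"
  proof
    show "pos ` {i. i < n \<and> pos i < pos j} \<subseteq> {..<pos j}" by blast
  next
    show "{..<pos j} \<subseteq> pos ` {i. i < n \<and> pos i < pos j}"
    proof
      fix x assume "x \<in> {..<pos j}"
      then have "x \<in> pos ` {..<n}" using img pj by auto
      then obtain i where "i < n" "x = pos i" by auto
      then show "x \<in> pos ` {i. i < n \<and> pos i < pos j}" using \<open>x \<in> {..<pos j}\<close> by auto
    qed
  qed
  have ij: "inj_on pos {i. i < n \<and> pos i < pos j}" using inj by (rule inj_on_subset) auto
  have "card (pos ` {i. i < n \<and> pos i < pos j}) = card {i. i < n \<and> pos i < pos j}"
    by (rule card_image[OF ij])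
  then have "card {i. i < n \<and> pos i < pos j} = pos j" unfolding imgj by simp
  moreover have "(\<Sum>i<n. if pos i < pos j then 1 else 0) = real (card {i. i < n \<and> pos i < pos j})"
    using sum_filter_conv[of "\<lambda>_. (1::real)" n "\<lambda>i. pos i < pos j"] by simp
  ultimately show ?thesis by simp
qed

lemma sidle_decomp:
  assumes bp: "bij_betw pos {..<n} {..<n}" and br: "bij_betw rk {..<n} {..<n}" and j: "j < n"
  shows "sidle_C y n p pos rk j = (\<Sum>i<n. (if i = j then 1 + p j else 0) + (if i \<noteq> j then acontr y p pos rk i j else 0))"
proof -
  have ip: "inj_on pos {..<n}" using bp by (simp add: bij_betw_def)
  have ir: "inj_on rk {..<n}" using br by (simp add: bij_betw_def)
  show ?thesis
  proof (cases "p j \<le> y")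
    case True
    have "sidle_C y n p pos rk j = (\<Sum>i<n. if pos i < pos j then 1 else 0) + (\<Sum>i<n. if i = j then 1 else 0)
        + (\<Sum>i<n. if p i \<le> y \<and> pos i \<le> pos j then p i else 0)"
      unfolding sidle_C_def using True pos_card[OF bp j] j sum_filter_conv[of p n "\<lambda>i. p i \<le> y \<and> pos i \<le> pos j"]
      by simp
    also have "... = (\<Sum>i<n. (if pos i < pos j then 1 else 0) + (if i = j then 1 else 0) + (if p i \<le> y \<and> pos i \<le> pos j then p i else 0))"
      by (simp add: sum.distrib)
    also have "... = (\<Sum>i<n. (if i = j then 1 + p j else 0) + (if i \<noteq> j then acontr y p pos rk i j else 0))"
    proof (rule sum.cong[OF refl])
      fix i assume i: "i \<in> {..<n}"
      have "i \<noteq> j \<Longrightarrow> pos i \<noteq> pos j" using ip i j by (meson inj_on_def lessThan_iff)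
      then show "(if pos i < pos j then 1 else 0) + (if i = j then 1 else 0) + (if p i \<le> y \<and> pos i \<le> pos j then p i else 0)
         = (if i = j then 1 + p j else 0) + (if i \<noteq> j then acontr y p pos rk i j else 0)"
        using True unfolding acontr_def by auto
    qed
    finally show ?thesis .
  next
    case False
    have "sidle_C y n p pos rk j = (\<Sum>i<n. 1) + (\<Sum>i<n. if p i \<le> y then p i else 0)
        + (\<Sum>i<n. if y < p i \<and> rk i \<le> rk j then p i else 0)"
      unfolding sidle_C_def using False sum_filter_conv[of p n "\<lambda>i. p i \<le> y"]
        sum_filter_conv[of p n "\<lambda>i. y < p i \<and> rk i \<le> rk j"]
      by simp
    also have "... = (\<Sum>i<n. 1 + (if p i \<le> y then p i else 0) + (if y < p i \<and> rk i \<le> rk j then p i else 0))"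
      by (simp add: sum.distrib)
    also have "... = (\<Sum>i<n. (if i = j then 1 + p j else 0) + (if i \<noteq> j then acontr y p pos rk i j else 0))"
    proof (rule sum.cong[OF refl])
      fix i assume i: "i \<in> {..<n}"
      have "i \<noteq> j \<Longrightarrow> rk i \<noteq> rk j" using ir i j by (meson inj_on_def lessThan_iff)
      then show "1 + (if p i \<le> y then p i else 0) + (if y < p i \<and> rk i \<le> rk j then p i else 0)
         = (if i = j then 1 + p j else 0) + (if i \<noteq> j then acontr y p pos rk i j else 0)"
        using False unfolding acontr_def by auto
    qed
    finally show ?thesis .
  qed
qed




definition sh :: "real \<Rightarrow> (nat \<Rightarrow> real) \<Rightarrow> nat \<Rightarrow> real" where "sh y p i = (if p i \<le> y then 1 else 0)"
definition pv :: "real \<Rightarrow> (nat \<Rightarrow> real) \<Rightarrow> nat \<Rightarrow> real" where "pv y p i = (if p i \<le> y then p i else 0)"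
definition lg :: "real \<Rightarrow> (nat \<Rightarrow> real) \<Rightarrow> nat \<Rightarrow> real" where "lg y p i = (if p i \<le> y then 0 else 1)"

definition Hf :: "real \<Rightarrow> real \<Rightarrow> (nat \<Rightarrow> real) \<Rightarrow> nat \<Rightarrow> nat \<Rightarrow> real" where
  "Hf y d p i j = sh y p i * (d * sh y p j - pv y p j + (d-1) * lg y p j)
     + pv y p i * (- sh y p j + (2+d)/y * pv y p j + d * lg y p j)
     + lg y p i * ((d-1) * sh y p j + d * pv y p j + (d*(1+y)-1) * lg y p j)"

lemma prod_le_min:
  fixes a b y :: real
  assumes "0 \<le> a" "a \<le> y" "0 \<le> b" "b \<le> y"
  shows "a * b \<le> y * min a b"
proof (cases "a \<le> b")
  case True
  then have "a * b \<le> a * y" using assms by (simp add: mult_left_mono)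
  then show ?thesis using True by (simp add: min_def mult.commute)
next
  case False
  then have "a * b \<le> y * b" using assms by (simp add: mult_right_mono)
  then show ?thesis using False by (simp add: min_def)
qed

lemma pair_ineq:
  fixes y d :: real
  assumes y: "0 < y" and d: "0 \<le> d" and pi: "0 \<le> p i" and pj: "0 \<le> p j"
    and ps: "pos i \<noteq> pos j" and rs: "rk i \<noteq> rk j"
    and o1: "y < p i \<and> y < p j \<and> rk i < rk j \<longrightarrow> p i \<le> p j"
    and o2: "y < p i \<and> y < p j \<and> rk j < rk i \<longrightarrow> p j \<le> p i"
  shows "acontr y p pos rk i j + acontr y p pos rk j i + Hf y d p i j \<le> (1+d) * (1 + min (p i) (p j))"
proof (cases "p i \<le> y"; cases "p j \<le> y")
  assume a: "p i \<le> y" "p j \<le> y"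
  have m: "p i * p j \<le> y * min (p i) (p j)" using prod_le_min pi pj a by blast
  have "(2+d)/y * (p i * p j) \<le> (2+d)/y * (y * min (p i) (p j))"
    using m d y by (intro mult_left_mono) auto
  also have "... = (2+d) * min (p i) (p j)" using y by simp
  finally have m2: "(2+d)/y * (p i * p j) \<le> (2+d) * min (p i) (p j)" .
  have "acontr y p pos rk i j + acontr y p pos rk j i \<le> 1 + max (p i) (p j)"
    using a ps unfolding acontr_def by (cases "pos i < pos j") auto
  moreover have "Hf y d p i j = d - p i - p j + (2+d)/y * (p i * p j)"
    using a unfolding Hf_def sh_def pv_def lg_def by (simp add: algebra_simps)
  moreover have "max (p i) (p j) + min (p i) (p j) = p i + p j" by (simp add: max_def min_def)
  ultimately show ?thesis using m2 by (simp add: algebra_simps)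
next
  assume a: "p i \<le> y" "\<not> p j \<le> y"
  have "acontr y p pos rk i j + acontr y p pos rk j i \<le> 2 + p i"
    using a unfolding acontr_def by auto
  moreover have "Hf y d p i j = (d - 1) + d * p i"
    using a unfolding Hf_def sh_def pv_def lg_def by (simp add: algebra_simps)
  moreover have "min (p i) (p j) = p i" using a by simp
  ultimately show ?thesis by (simp add: algebra_simps)
next
  assume a: "\<not> p i \<le> y" "p j \<le> y"
  have "acontr y p pos rk i j + acontr y p pos rk j i \<le> 2 + p j"
    using a unfolding acontr_def by auto
  moreover have "Hf y d p i j = (d - 1) + d * p j"
    using a unfolding Hf_def sh_def pv_def lg_def by (simp add: algebra_simps)
  moreover have "min (p i) (p j) = p j" using a by simp
  ultimately show ?thesis by (simp add: algebra_simps)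
next
  assume a: "\<not> p i \<le> y" "\<not> p j \<le> y"
  have "acontr y p pos rk i j + acontr y p pos rk j i = 2 + min (p i) (p j)"
    using a rs o1 o2 unfolding acontr_def by (cases "rk i < rk j") (auto simp: min_def)
  moreover have "Hf y d p i j = d*(1+y) - 1"
    using a unfolding Hf_def sh_def pv_def lg_def by (simp add: algebra_simps)
  moreover have "d * y \<le> d * min (p i) (p j)" using a d by (intro mult_left_mono) auto
  ultimately show ?thesis by (simp add: algebra_simps)
qed

lemma Hf_diag:
  fixes y d :: real
  assumes y: "0 < y" and d: "0 \<le> d" and pj: "0 \<le> p j"
  shows "Hf y d p j j \<le> 2 * d * (1 + p j)"
proof (cases "p j \<le> y")
  case True
  have "(2+d)/y * (p j * p j) \<le> (2+d)/y * (y * p j)"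
    using True d y pj by (intro mult_left_mono mult_right_mono) auto
  also have "... = (2+d) * p j" using y by simp
  finally have "(2+d)/y * (p j * p j) \<le> (2+d) * p j" .
  moreover have "Hf y d p j j = d - 2 * p j + (2+d)/y * (p j * p j)"
    using True unfolding Hf_def sh_def pv_def lg_def by (simp add: algebra_simps)
  moreover have "(2+d) * p j = 2 * p j + d * p j" by (simp add: algebra_simps)
  moreover have "2 * d * (1 + p j) = 2*d + 2*(d * p j)" by (simp add: algebra_simps)
  moreover have "0 \<le> d * p j" using d pj by simp
  ultimately show ?thesis using d by linarith
next
  case False
  have "Hf y d p j j = d*(1+y) - 1"
    using False unfolding Hf_def sh_def pv_def lg_def by (simp add: algebra_simps)
  moreover have "d * y \<le> d * p j" using False d by (intro mult_left_mono) auto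
  moreover have "0 \<le> d * p j" using d pj by simp
  moreover have "d*(1+y) = d + d*y" "2 * d * (1 + p j) = 2*d + 2*(d * p j)" by (simp_all add: algebra_simps)
  ultimately show ?thesis using d by linarith
qed

lemma Hf_sum:
  fixes y d :: real and I :: "nat set" and p :: "nat \<Rightarrow> real"
  defines "K \<equiv> (\<Sum>i\<in>I. sh y p i)" and "S \<equiv> (\<Sum>i\<in>I. pv y p i)" and "L \<equiv> (\<Sum>i\<in>I. lg y p i)"
  shows "(\<Sum>j\<in>I. \<Sum>i\<in>I. Hf y d p i j) = d*K^2 - 2*K*S + (2+d)/y*S^2 + 2*(d-1)*K*L + 2*d*S*L + (d*(1+y)-1)*L^2"
proof -
  have inner: "\<And>j. (\<Sum>i\<in>I. Hf y d p i j) = K * (d * sh y p j - pv y p j + (d-1) * lg y p j)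
     + S * (- sh y p j + (2+d)/y * pv y p j + d * lg y p j)
     + L * ((d-1) * sh y p j + d * pv y p j + (d*(1+y)-1) * lg y p j)"
    unfolding Hf_def K_def S_def L_def by (simp add: sum.distrib sum_distrib_right)
  define A where "A j = d * sh y p j - pv y p j + (d-1) * lg y p j" for j
  define B where "B j = - sh y p j + (2+d)/y * pv y p j + d * lg y p j" for j
  define C where "C j = (d-1) * sh y p j + d * pv y p j + (d*(1+y)-1) * lg y p j" for j
  have sA: "(\<Sum>j\<in>I. A j) = d*K - S + (d-1)*L"
    unfolding A_def K_def S_def L_def by (simp add: sum.distrib sum_subtractf sum_distrib_left)
  have sB: "(\<Sum>j\<in>I. B j) = -K + (2+d)/y*S + d*L"
    unfolding B_def K_def S_def L_def by (simp add: sum.distrib sum_subtractf sum_negf sum_distrib_left)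
  have sC: "(\<Sum>j\<in>I. C j) = (d-1)*K + d*S + (d*(1+y)-1)*L"
    unfolding C_def K_def S_def L_def by (simp add: sum.distrib sum_distrib_left)
  have "(\<Sum>j\<in>I. \<Sum>i\<in>I. Hf y d p i j) = (\<Sum>j\<in>I. K * A j + S * B j + L * C j)"
    using inner unfolding A_def B_def C_def by simp
  also have "... = K * (\<Sum>j\<in>I. A j) + S * (\<Sum>j\<in>I. B j) + L * (\<Sum>j\<in>I. C j)"
    by (simp add: sum.distrib sum_distrib_left)
  finally have "(\<Sum>j\<in>I. \<Sum>i\<in>I. Hf y d p i j) = K*(d*K - S + (d-1)*L) + S*(-K + (2+d)/y*S + d*L) + L*((d-1)*K + d*S + (d*(1+y)-1)*L)"
    unfolding sA sB sC .
  then show ?thesis by (simp add: algebra_simps power2_eq_square)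
qed




lemma feasible_exists:
  assumes p: "\<forall>j<n. 0 \<le> p j"
  shows "\<exists>st sp. feasible_schedule n p st sp"
proof -
  define P where "P = (\<Sum>i<n. p i)"
  have pP: "\<And>i. i < n \<Longrightarrow> p i \<le> P" unfolding P_def
    by (rule member_le_sum) (use p in auto)
  have P0: "0 \<le> P" unfolding P_def by (rule sum_nonneg) (use p in auto)
  define st where "st j = real j * (1 + P)" for j
  define sp where "sp j = st j + 1" for j
  have mono: "\<And>i j. i < j \<Longrightarrow> st i + (1 + P) \<le> st j"
  proof -
    fix i j :: nat assume "i < j"
    then have "real i + 1 \<le> real j" by simp
    then have "(real i + 1) * (1 + P) \<le> real j * (1 + P)" using P0 by (intro mult_right_mono) auto
    then show "st i + (1 + P) \<le> st j" unfolding st_def by (simp add: algebra_simps)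
  qed
  have mono2: "\<And>i j. i \<le> j \<Longrightarrow> st i \<le> st j" unfolding st_def using P0
    by (intro mult_right_mono) auto
  have "feasible_schedule n p st sp"
    unfolding feasible_schedule_def
  proof (intro conjI allI impI)
    fix j assume "j < n"
    show "0 \<le> st j" unfolding st_def using P0 by simp
    show "st j + 1 \<le> sp j" unfolding sp_def by simp
  next
    fix i j assume ij: "i < n" "j < n" "i \<noteq> j"
    show "st i + 1 \<le> st j \<or> st j + 1 \<le> st i"
    proof (cases "i < j")
      case True then show ?thesis using mono[of i j] P0 by simp
    next
      case False then have "j < i" using ij by simp
      then show ?thesis using mono[of j i] P0 by simp
    qed
    show "sp i + p i \<le> sp j \<or> sp j + p j \<le> sp i"
    proof (cases "i < j")
      case True then show ?thesis using mono[of i j] pP[of i] ij unfolding sp_def by simp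
    next
      case False then have "j < i" using ij by simp
      then show ?thesis using mono[of j i] pP[of j] ij unfolding sp_def by simp
    qed
  next
    fix i j assume ij: "i < n" "j < n"
    show "st i + 1 \<le> sp j \<or> sp j + p j \<le> st i"
    proof (cases "i \<le> j")
      case True then show ?thesis using mono2[of i j] unfolding sp_def by simp
    next
      case False then have "j < i" by simp
      then show ?thesis using mono[of j i] pP[of j] ij unfolding sp_def by simp
    qed
  qed
  then show ?thesis by blast
qed

lemma ratio_sched:
  fixes y d :: real
  assumes y: "0 < y" and d: "0 < d" and dy: "y < d*(2+d)" and det: "d^2 + (1+y-y^2)*d + y - 2 = 0"
    and p: "\<forall>j<n. 0 \<le> p j" and bp: "bij_betw pos {..<n} {..<n}" and lo: "long_order_ok y n p rk"
    and F: "feasible_schedule n p st sp"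
  shows "sidle_cost y n p pos rk \<le> (1+d) * sched_cost n p sp"
proof -
  have br: "bij_betw rk {..<n} {..<n}" using lo unfolding long_order_ok_def by blast
  have ordr: "\<forall>i<n. \<forall>j<n. y < p i \<and> y < p j \<and> rk i < rk j \<longrightarrow> p i \<le> p j"
    using lo unfolding long_order_ok_def by blast
  have ip: "inj_on pos {..<n}" using bp by (simp add: bij_betw_def)
  have ir: "inj_on rk {..<n}" using br by (simp add: bij_betw_def)
  define W where "W = (\<Sum>j<n. 1 + p j)"
  define M where "M = (\<Sum>j<n. \<Sum>i<n. if i\<noteq>j then 1 + min (p i) (p j) else 0)"
  define Ag where "Ag = (\<Sum>j<n. \<Sum>i<n. if i\<noteq>j then acontr y p pos rk i j else 0)"
  define H where "H = Hf y d p"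
  have alg: "sidle_cost y n p pos rk = W + Ag"
  proof -
    have "sidle_cost y n p pos rk = (\<Sum>j<n. \<Sum>i<n. (if i = j then 1 + p j else 0) + (if i \<noteq> j then acontr y p pos rk i j else 0))"
      unfolding sidle_cost_def by (rule sum.cong[OF refl]) (use sidle_decomp[OF bp br] in auto)
    also have "... = (\<Sum>j<n. (1 + p j) + (\<Sum>i<n. if i \<noteq> j then acontr y p pos rk i j else 0))"
      by (rule sum.cong[OF refl]) (simp add: sum.distrib)
    also have "... = W + Ag" unfolding W_def Ag_def by (simp add: sum.distrib)
    finally show ?thesis .
  qed
  have a2: "2*Ag \<le> (\<Sum>j<n. \<Sum>i<n. if i\<noteq>j then (1+d) * (1 + min (p i) (p j)) - H i j else 0)"
    unfolding Ag_def
  proof (rule pair_sum_le, intro ballI impI)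
    fix i j assume ij: "i \<in> {..<n}" "j \<in> {..<n}" "i \<noteq> j"
    have "pos i \<noteq> pos j" using ip ij by (meson inj_on_def)
    moreover have "rk i \<noteq> rk j" using ir ij by (meson inj_on_def)
    ultimately have "acontr y p pos rk i j + acontr y p pos rk j i + Hf y d p i j \<le> (1+d) * (1 + min (p i) (p j))"
      using pair_ineq[of y d p i j pos rk] y d p ij ordr by auto
    then show "acontr y p pos rk i j + acontr y p pos rk j i \<le> (1+d) * (1 + min (p i) (p j)) - H i j"
      unfolding H_def by simp
  qed
  have split: "(\<Sum>j<n. \<Sum>i<n. if i\<noteq>j then (1+d) * (1 + min (p i) (p j)) - H i j else 0)
      = (1+d) * M - ((\<Sum>j<n. \<Sum>i<n. H i j) - (\<Sum>j<n. H j j))"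
  proof -
    have "(\<Sum>j<n. \<Sum>i<n. if i\<noteq>j then (1+d) * (1 + min (p i) (p j)) - H i j else 0)
        = (\<Sum>j<n. \<Sum>i<n. (1+d) * (if i\<noteq>j then 1 + min (p i) (p j) else 0) - (H i j - (if i = j then H j j else 0)))"
      by (rule sum.cong[OF refl], rule sum.cong[OF refl]) auto
    also have "... = (1+d) * M - ((\<Sum>j<n. \<Sum>i<n. H i j) - (\<Sum>j<n. H j j))"
      unfolding M_def by (simp add: sum_subtractf sum_distrib_left)
    finally show ?thesis .
  qed
  have psd: "0 \<le> (\<Sum>j<n. \<Sum>i<n. H i j)"
    unfolding H_def Hf_sum using core_psd[OF y d dy det] by blast
  have diag: "(\<Sum>j<n. H j j) \<le> 2 * d * W"
  proof -
    have "(\<Sum>j<n. H j j) \<le> (\<Sum>j<n. 2 * d * (1 + p j))"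
      by (rule sum_mono) (use Hf_diag[OF y less_imp_le[OF d]] p in \<open>auto simp: H_def\<close>)
    then show ?thesis unfolding W_def by (simp add: sum_distrib_left)
  qed
  have opt: "W + (1/2) * M \<le> sched_cost n p sp" using opt_lb[OF p F] unfolding W_def M_def .
  have "2 * sidle_cost y n p pos rk \<le> 2 * W + (1+d) * M + 2 * d * W"
    using alg a2 split psd diag by linarith
  also have "... = 2 * (1+d) * (W + (1/2) * M)" by (simp add: algebra_simps)
  also have "... \<le> 2 * (1+d) * sched_cost n p sp" using opt d by (intro mult_left_mono) auto
  also have "... = 2 * ((1+d) * sched_cost n p sp)" by simp
  finally show ?thesis by simp
qed

theorem theorem4:
  fixes y0 :: real
  assumes y0_int: "1 < y0" "y0 < 2"
    and y0_root: "2 * y0 ^ 3 - 9 * y0 ^ 2 + 10 * y0 - 2 = 0"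
  defines "\<rho> \<equiv> (1 - y0 + y0 ^ 2 + sqrt (9 - 2 * y0 - y0 ^ 2 - 2 * y0 ^ 3 + y0 ^ 4)) / 2"
  shows "\<rho> \<le> 1.585 \<and>
    (\<forall>n p pos rk. (\<forall>j<n. 0 \<le> p j) \<longrightarrow> bij_betw pos {..<n} {..<n} \<longrightarrow>
        long_order_ok y0 n p rk \<longrightarrow> sidle_cost y0 n p pos rk \<le> \<rho> * OPT n p)"
proof -
  have yb: "1.355 < y0 \<and> y0 < 1.3555" using y_bounds[OF y0_int y0_root] .
  then have yb': "271/200 < y0" "y0 < 2711/2000" by simp_all
  note R = rho_facts[OF yb', folded \<rho>_def]
  define d where "d = \<rho> - 1"
  have d: "0 < d" using R(3) unfolding d_def by simp
  have dy: "y0 < d*(2+d)" using R(4) unfolding d_def .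
  have det: "d^2 + (1+y0-y0^2)*d + y0 - 2 = 0" using R(2) unfolding d_def .
  have y: "0 < y0" using y0_int by simp
  have rho: "\<rho> = 1 + d" unfolding d_def by simp
  show ?thesis
  proof (intro conjI allI impI)
    show "\<rho> \<le> 1.585" using R(1) .
  next
    fix n p pos rk
    assume p: "\<forall>j<n. 0 \<le> (p j::real)" and bp: "bij_betw pos {..<n} {..<n}" and lo: "long_order_ok y0 n p rk"
    define X where "X = {sched_cost n p sp | st sp. feasible_schedule n p st sp}"
    have ne: "X \<noteq> {}" using feasible_exists[OF p] unfolding X_def by blast
    have rpos: "0 < \<rho>" using rho d by simp
    have "\<forall>x\<in>X. sidle_cost y0 n p pos rk / \<rho> \<le> x"
    proof
      fix x assume "x \<in> X"
      then obtain st sp where F: "feasible_schedule n p st sp" and x: "x = sched_cost n p sp"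
        unfolding X_def by blast
      have "sidle_cost y0 n p pos rk \<le> \<rho> * x"
        using ratio_sched[OF y d dy det p bp lo F] rho x by simp
      then show "sidle_cost y0 n p pos rk / \<rho> \<le> x" using rpos by (simp add: divide_le_eq mult.commute)
    qed
    then have "sidle_cost y0 n p pos rk / \<rho> \<le> Inf X" using ne by (intro cInf_greatest) auto
    then have "sidle_cost y0 n p pos rk \<le> \<rho> * Inf X" using rpos by (simp add: divide_le_eq mult.commute)
    then show "sidle_cost y0 n p pos rk \<le> \<rho> * OPT n p" unfolding OPT_def X_def .
  qed
qed


end
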